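(* Let $R$ be a commutative ring with $\mathrm{Spec}(R)\neq\emptyset$, and let $M=\bigoplus_{\alpha\in\mathcal A}e_\alpha R$ be a free $R$-module with an infinite basis $\{e_\alpha\}_{\alpha\in\mathcal A}$. Then $\mathrm{Spec}_R(M)$, with the topology induced by the hull-kernel topology of $\mathrm{SMod}(M|R)$, is not quasi-compact (and hence not spectral).
   Context: $\mathrm{SMod}(M|R)$ is the set of $R$-submodules of $M$; the hull-kernel topology on it has as subbasis of closed sets the sets $\boldsymbol V(x_1,\dots,x_m):=\{N\mid x_1,\dots,x_m\in N\}$ for finite $\{x_1,\dots,x_m\}\subseteq M$. A prime submodule of $M$ is a submodule $P\neq M$ such that whenever $am\in P$ with $a\in R$, $m\in M$, then $m\in P$ or $aM\subseteq P$; $\mathrm{Spec}_R(M)$ is the set of prime submodules of $M$. *)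

theory Defs
  imports "HOL-Analysis.Analysis"
begin

definition prime_ideal_r :: "'r::comm_ring_1 set \<Rightarrow> bool" where
  "prime_ideal_r I \<longleftrightarrow> 0 \<in> I \<and> (\<forall>x\<in>I. \<forall>y\<in>I. x + y \<in> I) \<and> (\<forall>r. \<forall>x\<in>I. r * x \<in> I)
     \<and> I \<noteq> UNIV \<and> (\<forall>a b. a * b \<in> I \<longrightarrow> a \<in> I \<or> b \<in> I)"

text \<open>The free R-module with basis indexed by the type 'a: finitely supported functions.\<close>
definition free_mod :: "('a \<Rightarrow> 'r::comm_ring_1) set" where
  "free_mod = {f. finite {\<alpha>. f \<alpha> \<noteq> 0}}"

definition mod_smult :: "'r::comm_ring_1 \<Rightarrow> ('a \<Rightarrow> 'r) \<Rightarrow> ('a \<Rightarrow> 'r)" where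
  "mod_smult a f = (\<lambda>\<alpha>. a * f \<alpha>)"

definition is_submodule :: "('a \<Rightarrow> 'r::comm_ring_1) set \<Rightarrow> bool" where
  "is_submodule N \<longleftrightarrow> N \<subseteq> free_mod \<and> (\<lambda>_. 0) \<in> N
     \<and> (\<forall>x\<in>N. \<forall>y\<in>N. (\<lambda>\<alpha>. x \<alpha> + y \<alpha>) \<in> N) \<and> (\<forall>a. \<forall>x\<in>N. mod_smult a x \<in> N)"

definition SMod :: "('a \<Rightarrow> 'r::comm_ring_1) set set" where
  "SMod = {N. is_submodule N}"

definition V_sub :: "('a \<Rightarrow> 'r::comm_ring_1) set \<Rightarrow> ('a \<Rightarrow> 'r) set set" where
  "V_sub F = {N \<in> SMod. F \<subseteq> N}"

text \<open>Hull-kernel topology: the closed sets are generated by the V(F), F finite; equivalently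
  the open sets are generated by the complements SMod - V(F) together with SMod itself.\<close>
definition hull_kernel_topology :: "('a \<Rightarrow> 'r::comm_ring_1) set topology" where
  "hull_kernel_topology = topology_generated_by
     (insert SMod {SMod - V_sub F | F. finite F \<and> F \<subseteq> free_mod})"

definition prime_submodule :: "('a \<Rightarrow> 'r::comm_ring_1) set \<Rightarrow> bool" where
  "prime_submodule P \<longleftrightarrow> is_submodule P \<and> P \<noteq> free_mod \<and>
     (\<forall>a. \<forall>m\<in>free_mod. mod_smult a m \<in> P \<longrightarrow> m \<in> P \<or> (\<forall>m'\<in>free_mod. mod_smult a m' \<in> P))"

definition Spec_mod :: "('a \<Rightarrow> 'r::comm_ring_1) set set" where
  "Spec_mod = {P. prime_submodule P}"

end

theory Submission
  imports Defs
begin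

definition ebas :: "'a \<Rightarrow> ('a \<Rightarrow> 'r::comm_ring_1)" where
  "ebas a = (\<lambda>b. if b = a then 1 else 0)"

lemma ebas_free: "(ebas a :: 'a \<Rightarrow> 'r::comm_ring_1) \<in> free_mod"
proof -
  have "{b. (ebas a :: 'a \<Rightarrow> 'r) b \<noteq> 0} \<subseteq> {a}" by (auto simp: ebas_def)
  then show ?thesis unfolding free_mod_def by (auto intro: finite_subset)
qed

lemma span_lemma:
  fixes N :: "('a \<Rightarrow> 'r::comm_ring_1) set"
  assumes sub: "is_submodule N" and e: "\<And>a. ebas a \<in> N" and fin: "finite A"
  shows "\<And>f. {b. f b \<noteq> 0} \<subseteq> A \<Longrightarrow> f \<in> N"
  using fin
proof (induction A)
  case empty
  then have "f = (\<lambda>_. 0)" by auto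
  then show ?case using sub unfolding is_submodule_def by simp
next
  case (insert a A f)
  let ?g = "f(a := 0)"
  have "{b. ?g b \<noteq> 0} \<subseteq> A" using insert.prems by auto
  then have g: "?g \<in> N" using insert.IH by blast
  have h: "mod_smult (f a) (ebas a) \<in> N" using sub e unfolding is_submodule_def by blast
  have "f = (\<lambda>b. ?g b + mod_smult (f a) (ebas a) b)"
    by (auto simp: mod_smult_def ebas_def)
  then show ?case using sub g h unfolding is_submodule_def by metis
qed

lemma prime_misses:
  assumes "prime_submodule (P :: ('a \<Rightarrow> 'r::comm_ring_1) set)"
  shows "\<exists>a. ebas a \<notin> P"
proof (rule ccontr)
  assume "\<not> ?thesis"
  then have e: "\<And>a. ebas a \<in> P" by blast
  have sub: "is_submodule P" using assms unfolding prime_submodule_def by blast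
  have "free_mod \<subseteq> P"
  proof
    fix f :: "'a \<Rightarrow> 'r" assume "f \<in> free_mod"
    then have "finite {b. f b \<noteq> 0}" unfolding free_mod_def by simp
    then show "f \<in> P" using span_lemma[OF sub e] by blast
  qed
  moreover have "P \<subseteq> free_mod" using sub unfolding is_submodule_def by blast
  ultimately show False using assms unfolding prime_submodule_def by blast
qed

lemma witness_prime:
  fixes p :: "'r::comm_ring_1 set" and c :: 'a
  assumes p: "prime_ideal_r p"
  defines "P \<equiv> {f \<in> free_mod. f c \<in> p}"
  shows "prime_submodule P"
proof -
  have p0: "0 \<in> p" and padd: "\<forall>x\<in>p. \<forall>y\<in>p. x + y \<in> p" and pmul: "\<forall>r. \<forall>x\<in>p. r * x \<in> p"
    and pne: "p \<noteq> UNIV" and pp: "\<forall>a b. a * b \<in> p \<longrightarrow> a \<in> p \<or> b \<in> p"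
    using p unfolding prime_ideal_r_def by auto
  have one: "1 \<notin> p"
  proof
    assume "1 \<in> p"
    then have "\<forall>r. r \<in> p" using pmul by (metis mult.right_neutral)
    then show False using pne by auto
  qed
  have fz: "(\<lambda>_. 0::'r) \<in> (free_mod :: ('a \<Rightarrow> 'r) set)" unfolding free_mod_def by simp
  have fadd: "(\<lambda>\<alpha>. x \<alpha> + y \<alpha>) \<in> free_mod" if "x \<in> free_mod" "y \<in> free_mod" for x y :: "'a \<Rightarrow> 'r"
  proof -
    have "{\<alpha>. x \<alpha> + y \<alpha> \<noteq> 0} \<subseteq> {\<alpha>. x \<alpha> \<noteq> 0} \<union> {\<alpha>. y \<alpha> \<noteq> 0}" by auto
    then show ?thesis using that unfolding free_mod_def by (auto intro: finite_subset)
  qed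
  have fmul: "mod_smult a x \<in> free_mod" if "x \<in> free_mod" for a and x :: "'a \<Rightarrow> 'r"
  proof -
    have "{\<alpha>. a * x \<alpha> \<noteq> 0} \<subseteq> {\<alpha>. x \<alpha> \<noteq> 0}" by auto
    then show ?thesis using that unfolding free_mod_def mod_smult_def by (auto intro: finite_subset)
  qed
  have sub: "is_submodule P"
    unfolding is_submodule_def P_def using fz fadd fmul p0 padd pmul
    by (auto simp: mod_smult_def)
  have ne: "P \<noteq> free_mod"
  proof
    assume "P = free_mod"
    then have "ebas c \<in> P" using ebas_free[of c] by simp
    then show False using one unfolding P_def ebas_def by simp
  qed
  have pr: "\<forall>a. \<forall>m\<in>free_mod. mod_smult a m \<in> P \<longrightarrow> m \<in> P \<or> (\<forall>m'\<in>free_mod. mod_smult a m' \<in> P)"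
  proof (intro allI ballI impI)
    fix a and m :: "'a \<Rightarrow> 'r"
    assume m: "m \<in> free_mod" and am: "mod_smult a m \<in> P"
    then have "a * m c \<in> p" unfolding P_def mod_smult_def by simp
    then have "a \<in> p \<or> m c \<in> p" using pp by blast
    then show "m \<in> P \<or> (\<forall>m'\<in>free_mod. mod_smult a m' \<in> P)"
    proof
      assume "a \<in> p"
      have "\<forall>m'\<in>free_mod. mod_smult a m' \<in> P"
      proof
        fix m' :: "'a \<Rightarrow> 'r" assume "m' \<in> free_mod"
        moreover have "a * m' c \<in> p" using \<open>a \<in> p\<close> pmul by (metis mult.commute)
        ultimately show "mod_smult a m' \<in> P" using fmul unfolding P_def
          by (simp add: mod_smult_def)
      qed
      then show ?thesis by blast
    next
      assume "m c \<in> p" then show ?thesis using m unfolding P_def by blast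
    qed
  qed
  show ?thesis unfolding prime_submodule_def using sub ne pr by blast
qed

theorem mainTheorem7:
  assumes "infinite (UNIV :: 'a set)"
    and "\<exists>P :: 'r::comm_ring_1 set. prime_ideal_r P"
  shows "\<not> compact_space (subtopology (hull_kernel_topology :: ('a \<Rightarrow> 'r) set topology) Spec_mod)"
proof
  assume c: "compact_space (subtopology (hull_kernel_topology :: ('a \<Rightarrow> 'r) set topology) Spec_mod)"
  obtain p :: "'r set" where p: "prime_ideal_r p" using assms(2) by blast
  let ?X = "hull_kernel_topology :: ('a \<Rightarrow> 'r) set topology"
  have top: "topspace ?X = SMod"
    unfolding hull_kernel_topology_def by auto
  have specsub: "(Spec_mod :: ('a \<Rightarrow> 'r) set set) \<subseteq> SMod"
    unfolding Spec_mod_def SMod_def prime_submodule_def by auto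
  have "compactin ?X (topspace ?X \<inter> Spec_mod)"
    using c unfolding compact_space_def by (simp add: compactin_subtopology)
  then have cin: "compactin ?X Spec_mod" using top specsub by (simp add: Int_absorb1)
  define U where "U = (\<lambda>a::'a. SMod - V_sub {ebas a :: 'a \<Rightarrow> 'r})"
  have opn: "\<forall>B\<in>range U. openin ?X B"
    unfolding U_def hull_kernel_topology_def
    by (auto intro!: topology_generated_by_Basis simp: ebas_free)
  have cov: "Spec_mod \<subseteq> \<Union>(range U)"
  proof
    fix P assume P: "P \<in> (Spec_mod :: ('a \<Rightarrow> 'r) set set)"
    then obtain a where "ebas a \<notin> P" using prime_misses unfolding Spec_mod_def by blast
    then show "P \<in> \<Union>(range U)" using P specsub unfolding U_def V_sub_def by auto
  qed
  obtain F where F: "finite F" "F \<subseteq> range U" "Spec_mod \<subseteq> \<Union>F"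
    using cin opn cov unfolding compactin_def by metis
  then obtain A where A: "finite A" "F = U ` A" by (meson finite_subset_image)
  obtain c where cA: "c \<notin> A" using A(1) assms(1) by (meson ex_new_if_finite)
  define P where "P = {f \<in> (free_mod :: ('a \<Rightarrow> 'r) set). f c \<in> p}"
  have Pp: "prime_submodule P" unfolding P_def by (rule witness_prime[OF p])
  then have "P \<in> Spec_mod" unfolding Spec_mod_def by simp
  then obtain a where a: "a \<in> A" "P \<in> U a" using F(3) A(2) by blast
  have "ebas a \<in> P"
    unfolding P_def using a(1) cA ebas_free p unfolding prime_ideal_r_def ebas_def by auto
  then show False using a(2) unfolding U_def V_sub_def by auto
qed

end
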